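(* Let $g:[a,b]\to\mathbb R$ be increasing and left-continuous at every point of $(a,b)$, and let $f:[a,b]\to\mathbb R$ be $g$-Lipschitz continuous with Lipschitz constant $H$. Then $f^B$ is $g^B$-Lipschitz continuous with Lipschitz constant $H$. Furthermore, if $f$ is increasing, then $f^C$ is $g^C$-Lipschitz continuous with Lipschitz constant $H$.
   Context: For a function $\varphi:[a,b]\to\mathbb R$ having right limits, $\Delta^+\varphi(t)=\varphi(t^+)-\varphi(t)$, its jump part is $\varphi^B(t)=\sum_{s\in[a,t)}\Delta^+\varphi(s)$ and its continuous part is $\varphi^C=\varphi-\varphi^B$ (applied to both $f$ and $g$). For functions $u,v$ on $[a,b]$, $u$ is $v$-Lipschitz continuous with constant $H$ if $|u(t)-u(s)|\le H|v(t)-v(s)|$ for all $t,s\in[a,b]$. *)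

theory Defs
  imports "HOL-Analysis.Analysis"
begin

definition right_lim :: "real \<Rightarrow> (real \<Rightarrow> real) \<Rightarrow> real \<Rightarrow> real" where
  "right_lim b \<phi> t = Lim (at t within {t<..b}) \<phi>"

definition right_jump :: "real \<Rightarrow> (real \<Rightarrow> real) \<Rightarrow> real \<Rightarrow> real" where
  "right_jump b \<phi> t = right_lim b \<phi> t - \<phi> t"

definition jump_part :: "real \<Rightarrow> real \<Rightarrow> (real \<Rightarrow> real) \<Rightarrow> real \<Rightarrow> real" where
  "jump_part a b \<phi> t = infsum (right_jump b \<phi>) {a..<t}"

definition cont_part :: "real \<Rightarrow> real \<Rightarrow> (real \<Rightarrow> real) \<Rightarrow> real \<Rightarrow> real" where
  "cont_part a b \<phi> t = \<phi> t - jump_part a b \<phi> t"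

definition rel_lipschitz :: "real \<Rightarrow> real \<Rightarrow> (real \<Rightarrow> real) \<Rightarrow> (real \<Rightarrow> real) \<Rightarrow> real \<Rightarrow> bool" where
  "rel_lipschitz a b u v H \<longleftrightarrow>
     (\<forall>t\<in>{a..b}. \<forall>s\<in>{a..b}. \<bar>u t - u s\<bar> \<le> H * \<bar>v t - v s\<bar>)"

end

theory Submission imports Defs begin

lemma nontriv: "m < (b::real) \<Longrightarrow> at m within {m<..b} \<noteq> bot"
  by (simp add: at_within_eq_bot_iff)

lemma mono_rl:
  fixes \<phi> :: "real \<Rightarrow> real"
  assumes mono: "mono_on {a..b} \<phi>" and am: "a \<le> m" and mb: "m < b"
  shows "(\<phi> \<longlongrightarrow> right_lim b \<phi> m) (at m within {m<..b})"
    and "\<phi> m \<le> right_lim b \<phi> m"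
    and "\<And>y. y \<in> {m<..b} \<Longrightarrow> right_lim b \<phi> m \<le> \<phi> y"
proof -
  have eq: "{m<..} \<inter> {m<..b} = {m<..b}" by auto
  have T: "(\<phi> \<longlongrightarrow> Inf (\<phi> ` {m<..b})) (at m within {m<..b})"
    using Lim_right_bound[of "{m<..b}" m \<phi> "\<phi> m"] mono am
    unfolding eq by (auto simp: mono_on_def)
  have R: "right_lim b \<phi> m = Inf (\<phi> ` {m<..b})"
    unfolding right_lim_def using tendsto_Lim[OF nontriv[OF mb] T] .
  show "(\<phi> \<longlongrightarrow> right_lim b \<phi> m) (at m within {m<..b})" using T R by simp
  have bdd: "bdd_below (\<phi> ` {m<..b})"
    using mono am by (auto simp: mono_on_def bdd_below_def intro!: exI[of _ "\<phi> m"])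
  show "\<phi> m \<le> right_lim b \<phi> m" unfolding R
    using mono am mb by (auto simp: mono_on_def intro!: cInf_greatest)
  show "\<And>y. y \<in> {m<..b} \<Longrightarrow> right_lim b \<phi> m \<le> \<phi> y" unfolding R
    using bdd by (auto intro!: cInf_lower)
qed

lemma mono_finsum:
  fixes \<phi> :: "real \<Rightarrow> real"
  assumes mono: "mono_on {a..b} \<phi>" and F: "finite F"
  shows "\<forall>t. a \<le> s \<longrightarrow> s \<le> t \<longrightarrow> t \<le> b \<longrightarrow> F \<subseteq> {s..<t} \<longrightarrow> sum (right_jump b \<phi>) F \<le> \<phi> t - \<phi> s"
  using F
proof (induction F rule: finite_linorder_max_induct)
  case empty
  then show ?case using mono by (auto simp: mono_on_def)
next
  case (insert m F)
  show ?case
  proof (intro allI impI)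
    fix t assume as: "a \<le> s" "s \<le> t" "t \<le> b" "insert m F \<subseteq> {s..<t}"
    have "sum (right_jump b \<phi>) F \<le> \<phi> m - \<phi> s"
    proof -
      have "F \<subseteq> {s..<m}" using insert as by auto
      then show ?thesis using insert.IH as by auto
    qed
    moreover have "right_lim b \<phi> m \<le> \<phi> t"
      using mono_rl(3)[OF mono, of m t] as by auto
    moreover have "m \<notin> F" using insert by auto
    ultimately show "sum (right_jump b \<phi>) (insert m F) \<le> \<phi> t - \<phi> s"
      using insert by (simp add: right_jump_def)
  qed
qed

lemma mono_jump_nonneg:
  fixes \<phi> :: "real \<Rightarrow> real"
  assumes "mono_on {a..b} \<phi>" "m \<in> {a..<b}"
  shows "right_jump b \<phi> m \<ge> 0"
  using mono_rl(2)[OF assms(1)] assms(2) by (auto simp: right_jump_def)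

lemma mono_summable:
  fixes \<phi> :: "real \<Rightarrow> real"
  assumes mono: "mono_on {a..b} \<phi>" and ab: "a \<le> b"
  shows "right_jump b \<phi> summable_on {a..<b}"
proof (rule nonneg_bdd_above_summable_on)
  show "\<And>x. x \<in> {a..<b} \<Longrightarrow> 0 \<le> right_jump b \<phi> x"
    using mono_jump_nonneg[OF mono] by auto
  show "bdd_above (sum (right_jump b \<phi>) ` {F. F \<subseteq> {a..<b} \<and> finite F})"
    using mono_finsum[OF mono, of _ a] ab
    by (auto simp: bdd_above_def intro!: exI[of _ "\<phi> b - \<phi> a"])
qed

lemma mono_infsum:
  fixes \<phi> :: "real \<Rightarrow> real"
  assumes mono: "mono_on {a..b} \<phi>" and st: "a \<le> s" "s \<le> t" "t \<le> b"
  shows "infsum (right_jump b \<phi>) {s..<t} \<le> \<phi> t - \<phi> s"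
proof (rule infsum_le_finite_sums)
  show "right_jump b \<phi> summable_on {s..<t}"
    by (rule summable_on_subset[OF mono_summable[OF mono]]) (use st in auto)
  show "\<And>F. finite F \<Longrightarrow> F \<subseteq> {s..<t} \<Longrightarrow> sum (right_jump b \<phi>) F \<le> \<phi> t - \<phi> s"
    using mono_finsum[OF mono] st by blast
qed

lemma rj_lin:
  fixes \<phi> \<psi> :: "real \<Rightarrow> real"
  assumes mb: "m < b"
    and "(\<phi> \<longlongrightarrow> right_lim b \<phi> m) (at m within {m<..b})"
    and "(\<psi> \<longlongrightarrow> right_lim b \<psi> m) (at m within {m<..b})"
  shows "((\<lambda>x. c * \<phi> x + d * \<psi> x) \<longlongrightarrow> right_lim b (\<lambda>x. c * \<phi> x + d * \<psi> x) m) (at m within {m<..b})"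
    and "right_jump b (\<lambda>x. c * \<phi> x + d * \<psi> x) m = c * right_jump b \<phi> m + d * right_jump b \<psi> m"
proof -
  have T: "((\<lambda>x. c * \<phi> x + d * \<psi> x) \<longlongrightarrow> c * right_lim b \<phi> m + d * right_lim b \<psi> m) (at m within {m<..b})"
    using assms by (intro tendsto_intros)
  have R: "right_lim b (\<lambda>x. c * \<phi> x + d * \<psi> x) m = c * right_lim b \<phi> m + d * right_lim b \<psi> m"
    using tendsto_Lim[OF nontriv[OF mb] T] by (simp add: right_lim_def)
  show "((\<lambda>x. c * \<phi> x + d * \<psi> x) \<longlongrightarrow> right_lim b (\<lambda>x. c * \<phi> x + d * \<psi> x) m) (at m within {m<..b})"
    using T R by simp
  show "right_jump b (\<lambda>x. c * \<phi> x + d * \<psi> x) m = c * right_jump b \<phi> m + d * right_jump b \<psi> m"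
    using R by (simp add: right_jump_def algebra_simps)
qed

lemma jp_diff:
  fixes \<phi> :: "real \<Rightarrow> real"
  assumes S: "right_jump b \<phi> summable_on {a..<b}" and st: "a \<le> s" "s \<le> t" "t \<le> b"
  shows "jump_part a b \<phi> t - jump_part a b \<phi> s = infsum (right_jump b \<phi>) {s..<t}"
proof -
  have U: "{a..<t} = {a..<s} \<union> {s..<t}" using st by auto
  have "infsum (right_jump b \<phi>) {a..<t} = infsum (right_jump b \<phi>) {a..<s} + infsum (right_jump b \<phi>) {s..<t}"
    unfolding U
    by (rule infsum_Un_disjoint; (rule summable_on_subset[OF S])?) (use st in auto)
  then show ?thesis by (simp add: jump_part_def)
qed

theorem mainTheorem4:
  fixes a b H :: real and f g :: "real \<Rightarrow> real"
  assumes g_mono: "mono_on {a..b} g"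
    and g_leftcont: "\<forall>t\<in>{a<..<b}. (g \<longlongrightarrow> g t) (at_left t)"
    and f_lip: "rel_lipschitz a b f g H"
  shows "rel_lipschitz a b (jump_part a b f) (jump_part a b g) H \<and>
         (mono_on {a..b} f \<longrightarrow>
           rel_lipschitz a b (cont_part a b f) (cont_part a b g) H)"
proof (cases "a \<le> b")
  case False
  then show ?thesis by (simp add: rel_lipschitz_def)
next
  case ab: True
  have lip: "\<bar>f t - f s\<bar> \<le> H * (g t - g s)" if "a \<le> s" "s \<le> t" "t \<le> b" for s t
  proof -
    have "g s \<le> g t" using g_mono that by (auto simp: mono_on_def)
    moreover have "\<bar>f t - f s\<bar> \<le> H * \<bar>g t - g s\<bar>" using f_lip that by (auto simp: rel_lipschitz_def)
    ultimately show ?thesis by simp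
  qed
  define h1 where "h1 = (\<lambda>x. H * g x + (-1) * f x)"
  define h2 where "h2 = (\<lambda>x. H * g x + 1 * f x)"
  have m1: "mono_on {a..b} h1"
    unfolding mono_on_def h1_def
  proof (intro allI impI)
    fix r s assume "r \<in> {a..b} \<and> s \<in> {a..b} \<and> r \<le> s"
    then have "\<bar>f s - f r\<bar> \<le> H * (g s - g r)" using lip by auto
    then show "H * g r + (-1) * f r \<le> H * g s + (-1) * f s"
      by (auto simp: abs_le_iff algebra_simps)
  qed
  have m2: "mono_on {a..b} h2"
    unfolding mono_on_def h2_def
  proof (intro allI impI)
    fix r s assume "r \<in> {a..b} \<and> s \<in> {a..b} \<and> r \<le> s"
    then have "\<bar>f s - f r\<bar> \<le> H * (g s - g r)" using lip by auto
    then show "H * g r + 1 * f r \<le> H * g s + 1 * f s"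
      by (auto simp: abs_le_iff algebra_simps)
  qed
  have feq: "f = (\<lambda>x. (1/2) * h2 x + (-1/2) * h1 x)"
    unfolding h1_def h2_def by (auto simp: algebra_simps)
  have jf: "\<bar>right_jump b f m\<bar> \<le> H * right_jump b g m"
    and j1: "right_jump b h1 m = H * right_jump b g m - right_jump b f m"
    if m: "m \<in> {a..<b}" for m
  proof -
    have mb: "m < b" "a \<le> m" using m by auto
    have Tg: "(g \<longlongrightarrow> right_lim b g m) (at m within {m<..b})" using mono_rl(1)[OF g_mono mb(2,1)] .
    have T1: "(h1 \<longlongrightarrow> right_lim b h1 m) (at m within {m<..b})" using mono_rl(1)[OF m1 mb(2,1)] .
    have T2: "(h2 \<longlongrightarrow> right_lim b h2 m) (at m within {m<..b})" using mono_rl(1)[OF m2 mb(2,1)] .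
    have Tf: "(f \<longlongrightarrow> right_lim b f m) (at m within {m<..b})"
      using rj_lin(1)[OF mb(1) T2 T1, of "1/2" "-1/2"] feq by simp
    have e1: "right_jump b h1 m = H * right_jump b g m + (-1) * right_jump b f m"
      unfolding h1_def by (rule rj_lin(2)[OF mb(1) Tg Tf])
    have e2: "right_jump b h2 m = H * right_jump b g m + 1 * right_jump b f m"
      unfolding h2_def by (rule rj_lin(2)[OF mb(1) Tg Tf])
    have "right_jump b h1 m \<ge> 0" "right_jump b h2 m \<ge> 0"
      using mono_jump_nonneg[OF m1 m] mono_jump_nonneg[OF m2 m] by auto
    then show "\<bar>right_jump b f m\<bar> \<le> H * right_jump b g m"
      "right_jump b h1 m = H * right_jump b g m - right_jump b f m"
      using e1 e2 by auto
  qed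
  have Sg: "right_jump b g summable_on {a..<b}" by (rule mono_summable[OF g_mono ab])
  have SHg: "(\<lambda>x. H * right_jump b g x) summable_on {a..<b}" by (rule summable_on_cmult_right[OF Sg])
  have Sfa: "(\<lambda>x. norm (right_jump b f x)) summable_on {a..<b}"
    by (rule summable_on_comparison_test[OF SHg]) (use jf in auto)
  have Sf: "right_jump b f summable_on {a..<b}"
    using Sfa summable_on_iff_abs_summable_on_real by blast
  have part1: "\<bar>jump_part a b f t - jump_part a b f s\<bar> \<le> H * (jump_part a b g t - jump_part a b g s)
      \<and> 0 \<le> jump_part a b g t - jump_part a b g s"
    if st: "a \<le> s" "s \<le> t" "t \<le> b" for s t
  proof -
    have sub: "{s..<t} \<subseteq> {a..<b}" using st by auto
    have "\<bar>infsum (right_jump b f) {s..<t}\<bar> \<le> infsum (\<lambda>x. norm (right_jump b f x)) {s..<t}"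
      using norm_infsum_bound[of "right_jump b f" "{s..<t}"] summable_on_subset[OF Sfa sub] by simp
    also have "\<dots> \<le> infsum (\<lambda>x. H * right_jump b g x) {s..<t}"
      by (rule infsum_mono[OF summable_on_subset[OF Sfa sub] summable_on_subset[OF SHg sub]])
         (use jf sub in auto)
    also have "\<dots> = H * infsum (right_jump b g) {s..<t}"
      by (rule infsum_cmult_right) (rule summable_on_subset[OF Sg sub])
    finally show ?thesis
      using jp_diff[OF Sf st] jp_diff[OF Sg st] infsum_nonneg[of "{s..<t}" "right_jump b g"]
        mono_jump_nonneg[OF g_mono] sub by auto
  qed
  have L1: "rel_lipschitz a b (jump_part a b f) (jump_part a b g) H"
    unfolding rel_lipschitz_def
  proof (intro ballI)
    fix t s assume "t \<in> {a..b}" "s \<in> {a..b}"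
    then show "\<bar>jump_part a b f t - jump_part a b f s\<bar> \<le> H * \<bar>jump_part a b g t - jump_part a b g s\<bar>"
      using part1[of s t] part1[of t s] by (cases "s \<le> t") (auto simp: abs_minus_commute)
  qed
  have L2: "rel_lipschitz a b (cont_part a b f) (cont_part a b g) H" if fm: "mono_on {a..b} f"
  proof -
    have part2: "\<bar>cont_part a b f t - cont_part a b f s\<bar> \<le> H * (cont_part a b g t - cont_part a b g s)
      \<and> 0 \<le> cont_part a b g t - cont_part a b g s"
      if st: "a \<le> s" "s \<le> t" "t \<le> b" for s t
    proof -
      have sub: "{s..<t} \<subseteq> {a..<b}" using st by auto
      have A: "infsum (right_jump b f) {s..<t} \<le> f t - f s" by (rule mono_infsum[OF fm st])
      have B: "infsum (right_jump b g) {s..<t} \<le> g t - g s" by (rule mono_infsum[OF g_mono st])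
      have C: "infsum (right_jump b h1) {s..<t} \<le> h1 t - h1 s" by (rule mono_infsum[OF m1 st])
      have "infsum (right_jump b h1) {s..<t} = infsum (\<lambda>x. H * right_jump b g x + (- right_jump b f x)) {s..<t}"
        by (rule infsum_cong) (use j1 sub in auto)
      also have "\<dots> = infsum (\<lambda>x. H * right_jump b g x) {s..<t} + infsum (\<lambda>x. - right_jump b f x) {s..<t}"
        by (rule infsum_add) (use summable_on_subset[OF SHg sub] summable_on_uminus summable_on_subset[OF Sf sub] in auto)
      also have "\<dots> = H * infsum (right_jump b g) {s..<t} - infsum (right_jump b f) {s..<t}"
        using infsum_cmult_right[of H "right_jump b g" "{s..<t}"] summable_on_subset[OF Sg sub]
          infsum_uminus[of "right_jump b f" "{s..<t}"] by simp
      finally have D: "H * infsum (right_jump b g) {s..<t} - infsum (right_jump b f) {s..<t} \<le> h1 t - h1 s"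
        using C by simp
      show ?thesis
        using A B D jp_diff[OF Sf st] jp_diff[OF Sg st] unfolding cont_part_def h1_def
        by (auto simp: algebra_simps)
    qed
    show ?thesis
      unfolding rel_lipschitz_def
    proof (intro ballI)
      fix t s assume "t \<in> {a..b}" "s \<in> {a..b}"
      then show "\<bar>cont_part a b f t - cont_part a b f s\<bar> \<le> H * \<bar>cont_part a b g t - cont_part a b g s\<bar>"
        using part2[of s t] part2[of t s] by (cases "s \<le> t") (auto simp: abs_minus_commute)
    qed
  qed
  show ?thesis using L1 L2 by blast
qed

end
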